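(* Let $n\ge2$ and $D>0$. There exist $t_1,C>0$ such that for all $t\in(0,t_1)$, $$t\int_{\mathbb R}\big|\bar s^{(n)}_t(x)-\tfrac{d}{dx}\log p^{(n)}_t(x)\big|^2p^{(n)}_t(x)\,dx\le C\exp\!\big(-\Delta^2/(9t)\big).$$
   Context: $y_k=2(k-1)\Delta-D$ ($k\in[n]$), $\Delta=D/(n-1)$, $z_k=y_k+\Delta$ ($k\in[n-1]$). $p_{\mathcal N}(x;\sigma)=(\sqrt{2\pi}\sigma)^{-1}e^{-x^2/(2\sigma^2)}$, $p^{(n)}_t(x)=\frac1n\sum_kp_{\mathcal N}(x-y_k;\sqrt t)$. Piecewise-linear ESF: $\bar s^{(n)}_t(x)=(y_1-x)/t$ if $x\le z_1$; $(y_k-x)/t$ if $x\in[z_{k-1},z_k]$, $k\in\{2,\dots,n-1\}$; $(y_n-x)/t$ if $x\ge z_{n-1}$. (For $n=2$, $D=\Delta=1$: $\bar s_t(x)=(\mathrm{sgn}(x)-x)/t$.) *)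

theory Defs
  imports "HOL-Analysis.Analysis"
begin

definition Delta :: "nat \<Rightarrow> real \<Rightarrow> real" where
  "Delta n D = D / (real n - 1)"

definition ypt :: "nat \<Rightarrow> real \<Rightarrow> nat \<Rightarrow> real" where
  "ypt n D k = 2 * (real k - 1) * Delta n D - D"

definition zpt :: "nat \<Rightarrow> real \<Rightarrow> nat \<Rightarrow> real" where
  "zpt n D k = ypt n D k + Delta n D"

definition gauss_pdf :: "real \<Rightarrow> real \<Rightarrow> real" where
  "gauss_pdf x \<sigma> = exp (- x\<^sup>2 / (2 * \<sigma>\<^sup>2)) / (sqrt (2 * pi) * \<sigma>)"

definition mix_density :: "nat \<Rightarrow> real \<Rightarrow> real \<Rightarrow> real \<Rightarrow> real" where
  "mix_density n D t x = (1 / real n) * (\<Sum>k=1..n. gauss_pdf (x - ypt n D k) (sqrt t))"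

text \<open>At the breakpoints z_k the two adjacent formulas
  in the paper differ; we use the left-closed convention (y_k for x in (z_{k-1}, z_k]),
  which is immaterial for the integral (measure-zero set).\<close>
definition esf :: "nat \<Rightarrow> real \<Rightarrow> real \<Rightarrow> real \<Rightarrow> real" where
  "esf n D t x =
     (if x \<le> zpt n D 1 then (ypt n D 1 - x) / t
      else if x \<ge> zpt n D (n - 1) then (ypt n D n - x) / t
      else (ypt n D (LEAST k. 2 \<le> k \<and> k \<le> n - 1 \<and> x \<le> zpt n D k) - x) / t)"

end

theory Submission imports Defs "HOL-Probability.Distributions" begin

lemma Delta_pos: "n \<ge> 2 \<Longrightarrow> D > 0 \<Longrightarrow> Delta n D > 0"
  unfolding Delta_def by auto

lemma ypt_diff: "ypt n D k - ypt n D c = 2 * (real k - real c) * Delta n D"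
  unfolding ypt_def by (simp add: algebra_simps)

lemma ypt_range:
  assumes "n \<ge> 2" "D > 0" "1 \<le> k" "k \<le> n"
  shows "-D \<le> ypt n D k \<and> ypt n D k \<le> D"
proof -
  have n1: "real n - 1 > 0" using assms by auto
  have "(real k - 1) \<le> real n - 1" using assms by auto
  hence "2 * (real k - 1) * (D / (real n - 1)) \<le> 2 * (real n - 1) * (D / (real n - 1))"
    using assms n1 by (intro mult_right_mono mult_left_mono) auto
  also have "\<dots> = 2 * D" using n1 by (simp add: field_simps)
  finally have a: "2 * (real k - 1) * (D / (real n - 1)) \<le> 2 * D" .
  have b: "0 \<le> 2 * (real k - 1) * (D / (real n - 1))" using assms n1 by auto
  show ?thesis using a b unfolding ypt_def Delta_def by auto
qed

lemma sep_general:
  assumes "n \<ge> 2" "D > 0" "1 \<le> c" "c \<le> n"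
    and up: "c < n \<Longrightarrow> x \<le> ypt n D c + Delta n D"
    and lo: "1 < c \<Longrightarrow> ypt n D c - Delta n D \<le> x"
    and k: "1 \<le> k" "k \<le> n" "k \<noteq> c"
  shows "Delta n D \<le> \<bar>x - ypt n D k\<bar>"
proof -
  have dp: "Delta n D > 0" using Delta_pos assms by auto
  show ?thesis
  proof (cases "k > c")
    case True
    hence "real k - real c \<ge> 1" by auto
    hence "ypt n D k - ypt n D c \<ge> 2 * Delta n D"
      using ypt_diff[of n D k c] dp by (simp add: mult_right_mono)
    with up True k show ?thesis by auto
  next
    case False
    hence "real c - real k \<ge> 1" using k by auto
    hence "ypt n D c - ypt n D k \<ge> 2 * Delta n D"
      using ypt_diff[of n D c k] dp by (simp add: mult_right_mono)
    with lo False k show ?thesis by auto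
  qed
qed

lemma center:
  assumes "n \<ge> 2" "D > 0"
  shows "\<exists>c. 1 \<le> c \<and> c \<le> n \<and> esf n D t x = (ypt n D c - x) / t \<and>
     (\<forall>k. 1 \<le> k \<and> k \<le> n \<and> k \<noteq> c \<longrightarrow> Delta n D \<le> \<bar>x - ypt n D k\<bar>)"
proof -
  have zd: "zpt n D k = ypt n D k + Delta n D" for k unfolding zpt_def by simp
  have yn: "ypt n D n - Delta n D = ypt n D (n-1) + Delta n D"
    using ypt_diff[of n D n "n-1"] assms by (simp add: of_nat_diff)
  show ?thesis
  proof (cases "x \<le> zpt n D 1")
    case True
    hence "esf n D t x = (ypt n D 1 - x) / t" unfolding esf_def by simp
    moreover have "\<forall>k. 1 \<le> k \<and> k \<le> n \<and> k \<noteq> 1 \<longrightarrow> Delta n D \<le> \<bar>x - ypt n D k\<bar>"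
      using sep_general[of n D 1 x] assms True zd by auto
    ultimately show ?thesis using assms by (intro exI[of _ 1]) auto
  next
    case F1: False
    show ?thesis
    proof (cases "x \<ge> zpt n D (n - 1)")
      case True
      hence "esf n D t x = (ypt n D n - x) / t" unfolding esf_def using F1 by simp
      moreover have "\<forall>k. 1 \<le> k \<and> k \<le> n \<and> k \<noteq> n \<longrightarrow> Delta n D \<le> \<bar>x - ypt n D k\<bar>"
        using sep_general[of n D n x] assms True zd yn by auto
      ultimately show ?thesis using assms by (intro exI[of _ n]) auto
    next
      case F2: False
      define P where "P = (\<lambda>k. 2 \<le> k \<and> k \<le> n - 1 \<and> x \<le> zpt n D k)"
      define c where "c = (LEAST k. P k)"
      have "n - 1 \<noteq> 1" using F1 F2 by auto
      hence Pn: "P (n - 1)" using F2 assms unfolding P_def by auto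
      hence Pc: "P c" unfolding c_def by (rule LeastI)
      have e: "esf n D t x = (ypt n D c - x) / t"
        unfolding esf_def c_def P_def using F1 F2 by simp
      have lo: "ypt n D c - Delta n D \<le> x"
      proof (cases "c = 2")
        case True
        have "ypt n D 2 - Delta n D = ypt n D 1 + Delta n D"
          using ypt_diff[of n D 2 1] by simp
        then show ?thesis using F1 True zd by auto
      next
        case False
        hence c2: "2 \<le> c - 1" "c - 1 \<le> n - 1" using Pc unfolding P_def by auto
        have "\<not> P (c - 1)"
        proof
          assume "P (c - 1)"
          hence "c \<le> c - 1" unfolding c_def by (rule Least_le)
          thus False using c2 by auto
        qed
        hence "x > zpt n D (c - 1)" using c2 unfolding P_def by auto
        moreover have "ypt n D c - Delta n D = ypt n D (c-1) + Delta n D"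
          using ypt_diff[of n D c "c-1"] c2 by (simp add: of_nat_diff)
        ultimately show ?thesis using zd by auto
      qed
      have "\<forall>k. 1 \<le> k \<and> k \<le> n \<and> k \<noteq> c \<longrightarrow> Delta n D \<le> \<bar>x - ypt n D k\<bar>"
        using sep_general[of n D c x] assms Pc lo zd unfolding P_def by auto
      then show ?thesis using e Pc unfolding P_def by (intro exI[of _ c]) auto
    qed
  qed
qed

lemma gauss_bound:
  assumes "t > 0" "d \<le> \<bar>u\<bar>" "d \<ge> 0"
  shows "gauss_pdf u (sqrt t) \<le> sqrt 2 * exp (- d\<^sup>2 / (4 * t)) * normal_density 0 (sqrt (2 * t)) u"
proof -
  have e: "exp (- u\<^sup>2 / (2 * t)) = exp (- u\<^sup>2 / (4 * t)) * exp (- u\<^sup>2 / (4 * t))"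
    by (simp add: exp_add[symmetric])
  have "d\<^sup>2 \<le> u\<^sup>2" using assms by (metis abs_le_square_iff abs_of_nonneg)
  hence "exp (- u\<^sup>2 / (4 * t)) \<le> exp (- d\<^sup>2 / (4 * t))" using assms
    by (simp add: divide_right_mono)
  hence "exp (- u\<^sup>2 / (2 * t)) \<le> exp (- d\<^sup>2 / (4 * t)) * exp (- u\<^sup>2 / (4 * t))"
    unfolding e by (intro mult_right_mono) auto
  hence "exp (- u\<^sup>2 / (2 * t)) / (sqrt (2 * pi) * sqrt t) \<le>
     exp (- d\<^sup>2 / (4 * t)) * exp (- u\<^sup>2 / (4 * t)) / (sqrt (2 * pi) * sqrt t)"
    using assms by (intro divide_right_mono) auto
  also have "\<dots> = sqrt 2 * exp (- d\<^sup>2 / (4 * t)) * normal_density 0 (sqrt (2 * t)) u"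
    using assms unfolding normal_density_def
    by (simp add: real_sqrt_mult field_simps)
  finally show ?thesis unfolding gauss_pdf_def using assms by simp
qed

lemma gauss_deriv0:
  assumes "t > 0" "c \<noteq> 0"
  shows "((\<lambda>u. exp (- (u - a)\<^sup>2 / (2 * t)) / c) has_real_derivative
     exp (- (x - a)\<^sup>2 / (2 * t)) / c * (a - x) / t) (at x)"
  using assms by (auto intro!: derivative_eq_intros simp: field_simps power2_eq_square)

lemma gauss_deriv:
  assumes "t > 0"
  shows "((\<lambda>u. gauss_pdf (u - a) (sqrt t)) has_real_derivative
     gauss_pdf (x - a) (sqrt t) * (a - x) / t) (at x)"
proof -
  have eq: "(\<lambda>u. gauss_pdf (u - a) (sqrt t)) = (\<lambda>u. exp (- (u - a)\<^sup>2 / (2 * t)) / (sqrt (2 * pi) * sqrt t))"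
    using assms unfolding gauss_pdf_def by simp
  have "gauss_pdf (x - a) (sqrt t) = exp (- (x - a)\<^sup>2 / (2 * t)) / (sqrt (2 * pi) * sqrt t)"
    using assms unfolding gauss_pdf_def by simp
  then show ?thesis unfolding eq using assms gauss_deriv0[of t "sqrt (2*pi) * sqrt t" a x]
    by simp
qed


lemma mix_deriv:
  assumes "t > 0"
  shows "(mix_density n D t has_real_derivative
     (1 / real n) * (\<Sum>k=1..n. gauss_pdf (x - ypt n D k) (sqrt t) * (ypt n D k - x) / t)) (at x)"
proof -
  have "((\<lambda>u. \<Sum>k=1..n. gauss_pdf (u - ypt n D k) (sqrt t)) has_real_derivative
     (\<Sum>k=1..n. gauss_pdf (x - ypt n D k) (sqrt t) * (ypt n D k - x) / t)) (at x)"
    by (rule DERIV_sum) (rule gauss_deriv[OF assms])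
  hence "((\<lambda>u. (1 / real n) * (\<Sum>k=1..n. gauss_pdf (u - ypt n D k) (sqrt t))) has_real_derivative
     (1 / real n) * (\<Sum>k=1..n. gauss_pdf (x - ypt n D k) (sqrt t) * (ypt n D k - x) / t)) (at x)"
    by (rule DERIV_cmult)
  thus ?thesis unfolding mix_density_def[abs_def] .
qed

lemma gauss_pos: "t > 0 \<Longrightarrow> gauss_pdf u (sqrt t) > 0"
  unfolding gauss_pdf_def by auto

lemma mix_pos: "n \<ge> 1 \<Longrightarrow> t > 0 \<Longrightarrow> mix_density n D t x > 0"
  unfolding mix_density_def using gauss_pos
  by (intro mult_pos_pos sum_pos) auto

lemma deriv_ln_mix:
  assumes "t > 0" "n \<ge> 1"
  shows "deriv (\<lambda>u. ln (mix_density n D t u)) x =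
    ((1 / real n) * (\<Sum>k=1..n. gauss_pdf (x - ypt n D k) (sqrt t) * (ypt n D k - x) / t))
    / mix_density n D t x"
proof -
  have "((\<lambda>u. ln (mix_density n D t u)) has_real_derivative
     inverse (mix_density n D t x) * ((1 / real n) * (\<Sum>k=1..n. gauss_pdf (x - ypt n D k) (sqrt t) * (ypt n D k - x) / t))) (at x)"
    by (rule DERIV_chain2[OF DERIV_ln mix_deriv]) (use mix_pos assms in auto)
  from DERIV_imp_deriv[OF this] show ?thesis by (simp add: field_simps)
qed

lemma pointwise:
  assumes n: "n \<ge> 2" and D: "D > 0" and t: "t > 0"
  shows "(esf n D t x - deriv (\<lambda>u. ln (mix_density n D t u)) x)\<^sup>2 * mix_density n D t x
    \<le> (4 * D\<^sup>2 * sqrt 2 / (real n * t\<^sup>2)) * exp (- (Delta n D)\<^sup>2 / (4 * t))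
        * (\<Sum>k=1..n. normal_density (ypt n D k) (sqrt (2 * t)) x)"
proof -
  obtain c where c: "1 \<le> c" "c \<le> n" "esf n D t x = (ypt n D c - x) / t"
    and sep: "\<And>k. 1 \<le> k \<Longrightarrow> k \<le> n \<Longrightarrow> k \<noteq> c \<Longrightarrow> Delta n D \<le> \<bar>x - ypt n D k\<bar>"
    using center[OF n D, of t x] by blast
  define y where "y = ypt n D"
  define \<phi> where "\<phi> k = gauss_pdf (x - y k) (sqrt t)" for k
  define S where "S = (\<Sum>k=1..n. \<phi> k)"
  define B where "B = (\<Sum>k=1..n. \<phi> k * (y k - y c))"
  define M where "M = (\<Sum>k=1..n. \<phi> k * \<bar>y k - y c\<bar>)"
  define E where "E = exp (- (Delta n D)\<^sup>2 / (4 * t))"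
  define N where "N k = normal_density (y k) (sqrt (2 * t)) x" for k
  have phipos: "\<phi> k > 0" for k unfolding \<phi>_def using gauss_pos t by auto
  have Spos: "S > 0" unfolding S_def using phipos n by (intro sum_pos) auto
  have np: "real n > 0" using n by auto
  have mix: "mix_density n D t x = S / real n" unfolding mix_density_def S_def \<phi>_def y_def by simp
  have sumeq: "(\<Sum>k=1..n. \<phi> k * (y k - x) / t) = (B + (y c - x) * S) / t"
  proof -
    have "(\<Sum>k=1..n. \<phi> k * (y k - x) / t) = (\<Sum>k=1..n. \<phi> k * (y k - y c) + \<phi> k * (y c - x)) / t"
      by (simp add: sum_divide_distrib algebra_simps)
    also have "(\<Sum>k=1..n. \<phi> k * (y k - y c) + \<phi> k * (y c - x)) = B + (\<Sum>k=1..n. \<phi> k * (y c - x))"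
      unfolding B_def by (rule sum.distrib)
    also have "(\<Sum>k=1..n. \<phi> k * (y c - x)) = (y c - x) * S"
      unfolding S_def by (simp add: sum_distrib_left mult.commute)
    finally show ?thesis .
  qed
  have dv: "deriv (\<lambda>u. ln (mix_density n D t u)) x = ((B + (y c - x) * S) / t) / S"
    using deriv_ln_mix[OF t, of n D x] n mix np sumeq unfolding \<phi>_def y_def
    by (simp add: field_simps)
  have diff: "esf n D t x - deriv (\<lambda>u. ln (mix_density n D t u)) x = - (B / (t * S))"
    unfolding dv c(3) y_def[symmetric] using Spos t by (simp add: field_simps)
  have lhs: "(esf n D t x - deriv (\<lambda>u. ln (mix_density n D t u)) x)\<^sup>2 * mix_density n D t x
      = B\<^sup>2 / (t\<^sup>2 * S * real n)"
    unfolding diff mix using Spos t np by (simp add: field_simps power2_eq_square)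
  have BM: "\<bar>B\<bar> \<le> M" unfolding B_def M_def
    using sum_abs[of "\<lambda>k. \<phi> k * (y k - y c)" "{1..n}"] phipos
    by (simp add: abs_mult less_imp_le)
  have yb: "\<bar>y k - y c\<bar> \<le> 2 * D" if "1 \<le> k" "k \<le> n" for k
    using ypt_range[OF n D that] ypt_range[OF n D c(1,2)] unfolding y_def by auto
  have MS: "M \<le> 2 * D * S" unfolding M_def S_def sum_distrib_left
    using yb phipos by (intro sum_mono) (simp add: mult.commute less_imp_le mult_left_mono)
  have B2: "B\<^sup>2 \<le> M * (2 * D * S)"
  proof -
    have "B\<^sup>2 = \<bar>B\<bar> * \<bar>B\<bar>" by (simp add: power2_eq_square)
    also have "\<dots> \<le> M * (2 * D * S)" using BM MS by (intro mult_mono) auto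
    finally show ?thesis .
  qed
  have termb: "\<phi> k * \<bar>y k - y c\<bar> \<le> 2 * D * sqrt 2 * E * N k" if k: "1 \<le> k" "k \<le> n" for k
  proof (cases "k = c")
    case True
    then show ?thesis unfolding N_def E_def using D t by simp
  next
    case False
    have "\<phi> k \<le> sqrt 2 * E * N k"
      unfolding \<phi>_def E_def N_def using gauss_bound[OF t sep[OF k False]] Delta_pos[OF n D]
      unfolding normal_density_def y_def by (simp add: power2_commute)
    moreover have "\<bar>y k - y c\<bar> \<le> 2 * D" using yb k .
    ultimately have "\<phi> k * \<bar>y k - y c\<bar> \<le> (sqrt 2 * E * N k) * (2 * D)"
      using phipos by (intro mult_mono) (auto simp: less_imp_le E_def N_def)
    thus ?thesis by (simp add: algebra_simps)
  qed
  have M2: "M \<le> 2 * D * sqrt 2 * E * (\<Sum>k=1..n. N k)"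
    unfolding M_def sum_distrib_left using termb by (intro sum_mono) auto
  have "B\<^sup>2 / (t\<^sup>2 * S * real n) \<le> M * (2 * D * S) / (t\<^sup>2 * S * real n)"
    using B2 Spos t np by (intro divide_right_mono) auto
  also have "\<dots> = M * (2 * D) / (t\<^sup>2 * real n)" using Spos by (simp add: field_simps)
  also have "\<dots> \<le> (2 * D * sqrt 2 * E * (\<Sum>k=1..n. N k)) * (2 * D) / (t\<^sup>2 * real n)"
    using M2 D t np by (intro divide_right_mono mult_right_mono) auto
  also have "\<dots> = (4 * D\<^sup>2 * sqrt 2 / (real n * t\<^sup>2)) * E * (\<Sum>k=1..n. N k)"
    by (simp add: field_simps power2_eq_square)
  finally show ?thesis unfolding lhs E_def N_def y_def .
qed


lemma final_ineq:
  fixes t d :: real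
  assumes "t > 0" "d > 0"
  shows "exp (- d\<^sup>2 / (4 * t)) / t \<le> (36 / (5 * d\<^sup>2)) * exp (- d\<^sup>2 / (9 * t))"
proof -
  define a where "a = 5 * d\<^sup>2 / (36 * t)"
  have ap: "a > 0" unfolding a_def using assms by auto
  have e: "exp (- d\<^sup>2 / (4 * t)) = exp (- d\<^sup>2 / (9 * t)) * exp (- a)"
    unfolding a_def exp_add[symmetric] by (rule arg_cong[where f=exp]) (simp add: field_simps)
  have "a \<le> exp a" using exp_ge_add_one_self[of a] by linarith
  hence "a * exp (- a) \<le> 1" by (simp add: exp_minus field_simps)
  hence "exp (- a) / t \<le> 1 / (a * t)" using ap assms by (simp add: field_simps)
  also have "1 / (a * t) = 36 / (5 * d\<^sup>2)" unfolding a_def using assms by (simp add: field_simps)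
  finally have "exp (- a) / t \<le> 36 / (5 * d\<^sup>2)" .
  hence "exp (- d\<^sup>2 / (9 * t)) * (exp (- a) / t) \<le> exp (- d\<^sup>2 / (9 * t)) * (36 / (5 * d\<^sup>2))"
    by (intro mult_left_mono) auto
  thus ?thesis unfolding e by (simp add: algebra_simps)
qed

theorem mainTheorem3:
  fixes n :: nat and D :: real
  assumes "n \<ge> 2" and "D > 0"
  shows "\<exists>t1 C. t1 > 0 \<and> C > 0 \<and>
    (\<forall>t. 0 < t \<and> t < t1 \<longrightarrow>
      t * (\<integral>x. (esf n D t x - deriv (\<lambda>u. ln (mix_density n D t u)) x)\<^sup>2
                   * mix_density n D t x \<partial>lborel)
      \<le> C * exp (- (Delta n D)\<^sup>2 / (9 * t)))"
proof -
  define d where "d = Delta n D"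
  have dp: "d > 0" unfolding d_def using Delta_pos assms by auto
  define C where "C = 4 * D\<^sup>2 * sqrt 2 * (36 / (5 * d\<^sup>2))"
  have Cp: "C > 0" unfolding C_def using dp assms by auto
  have np: "real n > 0" using assms by auto
  have main: "t * (\<integral>x. (esf n D t x - deriv (\<lambda>u. ln (mix_density n D t u)) x)\<^sup>2
                   * mix_density n D t x \<partial>lborel) \<le> C * exp (- d\<^sup>2 / (9 * t))"
    if t: "t > 0" for t
  proof -
    define K where "K = (4 * D\<^sup>2 * sqrt 2 / (real n * t\<^sup>2)) * exp (- d\<^sup>2 / (4 * t))"
    have Kp: "K \<ge> 0" unfolding K_def using np t by auto
    have int: "integrable lborel (\<lambda>x. K * (\<Sum>k=1..n. normal_density (ypt n D k) (sqrt (2 * t)) x))"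
    proof -
      have "integrable lborel (\<lambda>x. \<Sum>k\<in>{1..n}. normal_density (ypt n D k) (sqrt (2 * t)) x)"
        using t by (intro Bochner_Integration.integrable_sum Distributions.integrable_normal_density) auto
      thus ?thesis by simp
    qed
    have "(\<integral>x. (esf n D t x - deriv (\<lambda>u. ln (mix_density n D t u)) x)\<^sup>2
                   * mix_density n D t x \<partial>lborel)
       \<le> (\<integral>x. K * (\<Sum>k=1..n. normal_density (ypt n D k) (sqrt (2 * t)) x) \<partial>lborel)"
      using int
    proof (rule integral_mono')
      fix x
      show "(esf n D t x - deriv (\<lambda>u. ln (mix_density n D t u)) x)\<^sup>2 * mix_density n D t x
         \<le> K * (\<Sum>k=1..n. normal_density (ypt n D k) (sqrt (2 * t)) x)"
        using pointwise[OF assms t, of x] unfolding K_def d_def by simp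
      show "0 \<le> K * (\<Sum>k=1..n. normal_density (ypt n D k) (sqrt (2 * t)) x)"
        using Kp by (intro mult_nonneg_nonneg sum_nonneg) auto
    qed
    also have "\<dots> = K * real n"
      by (subst integral_mult_right_zero, subst Bochner_Integration.integral_sum) (use t in \<open>auto simp: Distributions.integral_normal_density\<close>)
    finally have "t * (\<integral>x. (esf n D t x - deriv (\<lambda>u. ln (mix_density n D t u)) x)\<^sup>2
                   * mix_density n D t x \<partial>lborel) \<le> t * (K * real n)"
      using t by (intro mult_left_mono) auto
    also have "t * (K * real n) = 4 * D\<^sup>2 * sqrt 2 * (exp (- d\<^sup>2 / (4 * t)) / t)"
      unfolding K_def using t np by (simp add: field_simps power2_eq_square)
    also have "\<dots> \<le> 4 * D\<^sup>2 * sqrt 2 * ((36 / (5 * d\<^sup>2)) * exp (- d\<^sup>2 / (9 * t)))"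
      using final_ineq[OF t dp] assms by (intro mult_left_mono) auto
    also have "\<dots> = C * exp (- d\<^sup>2 / (9 * t))" unfolding C_def by simp
    finally show ?thesis .
  qed
  show ?thesis
    by (rule exI[of _ 1], rule exI[of _ C]) (use Cp main in \<open>auto simp: d_def\<close>)
qed

end
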